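(* Let $\overrightarrow{w}=(w_1,w_2,w_3)\in(0,\infty)^3$ satisfy $w_1+w_2+w_3\ge 2\max\{w_1,w_2,w_3\}$. Then there exists a $3$-dimensional $\overrightarrow{w}$-CM copula, i.e. a random vector $(U_1,U_2,U_3)$ with each $U_i$ uniform on $[0,1]$ such that $P\left(w_1U_1+w_2U_2+w_3U_3=\frac{w_1+w_2+w_3}{2}\right)=1$.
   Context: A $d$-dimensional copula $C$ is $\overrightarrow{w}$-CM if a random vector $\overrightarrow{U}=(U_1,\dots,U_d)$ with distribution function $C$ satisfies $P\left(\sum_{i=1}^d w_iU_i=\frac12\sum_{i=1}^d w_i\right)=1$. *)

theory Defs
  imports "HOL-Probability.Probability"
begin

text \<open>A Borel probability measure on the cube space R^3 (the law of a random vector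
  (U1,U2,U3)) whose three one-dimensional marginals are uniform on [0,1]; the
  distribution function of such a law is exactly a 3-dimensional copula.\<close>
definition copula_law3 :: "(real \<times> real \<times> real) measure \<Rightarrow> bool" where
  "copula_law3 M \<longleftrightarrow> prob_space M \<and> sets M = sets borel \<and>
     distr M lborel (\<lambda>(u1,u2,u3). u1) = uniform_measure lborel {0..1} \<and>
     distr M lborel (\<lambda>(u1,u2,u3). u2) = uniform_measure lborel {0..1} \<and>
     distr M lborel (\<lambda>(u1,u2,u3). u3) = uniform_measure lborel {0..1}"

definition wCM3 :: "real \<times> real \<times> real \<Rightarrow> (real \<times> real \<times> real) measure \<Rightarrow> bool" where
  "wCM3 w M \<longleftrightarrow> copula_law3 M \<and>
     (case w of (w1,w2,w3) \<Rightarrow>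
        prob_space.prob M {(u1,u2,u3). w1*u1 + w2*u2 + w3*u3 = (w1+w2+w3)/2} = 1)"

end

theory Submission
  imports Defs
begin

definition tent :: "real \<Rightarrow> real \<Rightarrow> real" where
  "tent r t = (if t \<le> r then t / r else (1 - t) / (1 - r))"
definition shft :: "real \<Rightarrow> real \<Rightarrow> real" where
  "shft c t = (if c \<le> t then t - c else t + 1 - c)"

abbreviation UU :: "real measure" where "UU \<equiv> uniform_measure lborel {0..1::real}"

lemma tent_meas[measurable]: "tent r \<in> borel_measurable borel"
  unfolding tent_def by measurable
lemma shft_meas[measurable]: "shft c \<in> borel_measurable borel"
  unfolding shft_def by measurable

lemma UU_prob: "prob_space UU"
  by (rule prob_space_uniform_measure) auto

lemma UU_rd: "real_distribution UU"
  unfolding real_distribution_def real_distribution_axioms_def using UU_prob by simp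

lemma measure_UU: "B \<in> sets borel \<Longrightarrow> measure UU B = measure lborel ({0..1} \<inter> B)"
  by (subst measure_uniform_measure) auto

lemma distr_UU_eqI:
  assumes f[measurable]: "f \<in> borel_measurable borel"
    and h: "\<And>x. measure lborel ({0..1} \<inter> f -` {..x}) = measure lborel ({0..1} \<inter> {..x})"
  shows "distr UU lborel f = UU"
proof (rule cdf_unique)
  show "real_distribution (distr UU lborel f)"
    unfolding real_distribution_def real_distribution_axioms_def
    using UU_prob by (auto intro!: prob_space.prob_space_distr)
  show "real_distribution UU" by (rule UU_rd)
  show "cdf (distr UU lborel f) = cdf UU"
  proof
    fix x
    have "cdf (distr UU lborel f) x = measure UU (f -` {..x})"
      unfolding cdf_def by (subst measure_distr) auto
    also have "\<dots> = measure lborel ({0..1} \<inter> f -` {..x})"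
      using measurable_sets[OF f, of "{..x}"] by (subst measure_UU) auto
    also have "\<dots> = measure lborel ({0..1} \<inter> {..x})" by (rule h)
    also have "\<dots> = cdf UU x" unfolding cdf_def by (subst measure_UU) auto
    finally show "cdf (distr UU lborel f) x = cdf UU x" .
  qed
qed

lemma meas_clamp: "measure lborel ({0..1} \<inter> {..x}) = max 0 (min 1 (x::real))"
proof -
  consider "x < 0" | "0 \<le> x" "x \<le> 1" | "x > 1" by linarith
  then show ?thesis
  proof cases
    case 1 then have "{0..1} \<inter> {..x} = {}" by auto
    then show ?thesis using 1 by simp
  next
    case 2 then have "{0..1} \<inter> {..x} = {0..x}" by auto
    then show ?thesis using 2 by simp
  next
    case 3 then have "{0..1} \<inter> {..x} = {0..1}" by auto
    then show ?thesis using 3 by simp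
  qed
qed

lemma sandwich:
  fixes L S V :: "real set"
  assumes "L \<subseteq> S" "S \<subseteq> V" "L \<in> sets lborel" "S \<in> sets lborel" "V \<in> fmeasurable lborel"
    "measure lborel L \<ge> v" "measure lborel V \<le> v"
  shows "measure lborel S = v"
proof -
  have "S \<in> fmeasurable lborel" using assms by (meson fmeasurableI2)
  then have "measure lborel L \<le> measure lborel S" using assms measure_mono_fmeasurable by blast
  moreover have "measure lborel S \<le> measure lborel V" using assms measure_mono_fmeasurable by blast
  ultimately show ?thesis using assms by linarith
qed

lemma two_int:
  fixes a b c d :: real
  assumes "a \<le> b" "b \<le> c" "c \<le> d"
  shows "measure lborel ({a..b} \<union> {c<..d}) = (b - a) + (d - c)"
    and "measure lborel ({a..b} \<union> {c..d}) \<le> (b - a) + (d - c)"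
proof -
  have "measure lborel ({a..b} \<union> {c<..d}) = measure lborel {a..b} + measure lborel {c<..d}"
    by (rule measure_Union) (use assms in auto)
  then show "measure lborel ({a..b} \<union> {c<..d}) = (b - a) + (d - c)" using assms by simp
  have "measure lborel ({a..b} \<union> {c..d}) \<le> measure lborel {a..b} + measure lborel {c..d}"
    by (rule measure_Un_le) auto
  then show "measure lborel ({a..b} \<union> {c..d}) \<le> (b - a) + (d - c)" using assms by simp
qed


lemma tent_nonneg: "0 \<le> r \<Longrightarrow> r \<le> 1 \<Longrightarrow> 0 \<le> t \<Longrightarrow> t \<le> 1 \<Longrightarrow> 0 \<le> tent r t"
  unfolding tent_def by auto

lemma tent_le_1: "0 \<le> r \<Longrightarrow> r \<le> 1 \<Longrightarrow> 0 \<le> t \<Longrightarrow> t \<le> 1 \<Longrightarrow> tent r t \<le> 1"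
  unfolding tent_def by (auto simp: divide_le_eq)

lemma tent_le_a: "0 \<le> r \<Longrightarrow> r \<le> 1 \<Longrightarrow> 0 \<le> x \<Longrightarrow> x \<le> 1 \<Longrightarrow> 0 \<le> t \<Longrightarrow> t \<le> r * x \<Longrightarrow> tent r t \<le> x"
proof -
  assume a: "0 \<le> r" "r \<le> 1" "0 \<le> x" "x \<le> 1" "0 \<le> t" "t \<le> r * x"
  have "r * x \<le> r" using a by (simp add: mult_left_le)
  then have tr: "t \<le> r" using a by linarith
  show ?thesis
  proof (cases "r = 0")
    case True then show ?thesis using a tr unfolding tent_def by auto
  next
    case False then show ?thesis using a tr unfolding tent_def by (auto simp: divide_le_eq mult.commute)
  qed
qed

lemma tent_le_b: "0 \<le> r \<Longrightarrow> r \<le> 1 \<Longrightarrow> x \<le> 1 \<Longrightarrow> 1 - (1 - r) * x < t \<Longrightarrow> t \<le> 1 \<Longrightarrow> tent r t \<le> x"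
proof -
  assume a: "0 \<le> r" "r \<le> 1" "x \<le> 1" "1 - (1 - r) * x < t" "t \<le> 1"
  have "(1 - r) * x \<le> 1 - r" using a by (simp add: mult_left_le)
  then have tr: "r < t" using a by linarith
  then have "r < 1" using a by linarith
  then show ?thesis using a tr unfolding tent_def by (auto simp: divide_le_eq mult.commute)
qed

lemma tent_le_c: "0 \<le> r \<Longrightarrow> r \<le> 1 \<Longrightarrow> 0 \<le> t \<Longrightarrow> t \<le> 1 \<Longrightarrow> tent r t \<le> x \<Longrightarrow>
   t \<le> r * x \<or> 1 - (1 - r) * x \<le> t"
proof -
  assume a: "0 \<le> r" "r \<le> 1" "0 \<le> t" "t \<le> 1" "tent r t \<le> x"
  show ?thesis
  proof (cases "t \<le> r")
    case True
    show ?thesis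
    proof (cases "r = 0")
      case True then show ?thesis using a \<open>t \<le> r\<close> unfolding tent_def by auto
    next
      case False then show ?thesis using a \<open>t \<le> r\<close> unfolding tent_def
        by (auto simp: divide_le_eq mult.commute)
    qed
  next
    case False
    then have "r < 1" using a by linarith
    then show ?thesis using a False unfolding tent_def by (auto simp: divide_le_eq mult.commute)
  qed
qed

lemma tent_cdf:
  assumes r: "0 \<le> r" "r \<le> 1"
  shows "measure lborel ({0..1} \<inter> tent r -` {..x}) = measure lborel ({0..1} \<inter> {..x})"
proof -
  have S: "{0..1} \<inter> tent r -` {..x} \<in> sets lborel"
    using measurable_sets[OF tent_meas, of "{..x}" r] by auto
  consider "x < 0" | "0 \<le> x" "x < 1" | "x \<ge> 1" by linarith
  then show ?thesis
  proof cases
    case 1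
    then have "{0..1} \<inter> tent r -` {..x} = {}" using tent_nonneg[OF r] by force
    moreover have "{0..1} \<inter> {..x} = {}" using 1 by auto
    ultimately show ?thesis by simp
  next
    case 3
    then have "{0..1} \<inter> tent r -` {..x} = {0..1}" using tent_le_1[OF r] by force
    moreover have "{0..1} \<inter> {..x} = {0..1}" using 3 by auto
    ultimately show ?thesis by simp
  next
    case 2
    have rx: "r * x \<le> 1 - (1 - r) * x" using 2 r by (simp add: algebra_simps)
    have rx0: "0 \<le> r * x" using 2 r by simp
    have rx1: "1 - (1 - r) * x \<le> 1" using 2 r by simp
    have "measure lborel ({0..1} \<inter> tent r -` {..x}) = x"
    proof (rule sandwich[where L="{0..r*x} \<union> {1 - (1 - r) * x<..1}" and V="{0..r*x} \<union> {1 - (1 - r) * x..1}"])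
      show "{0..r*x} \<union> {1 - (1 - r) * x<..1} \<subseteq> {0..1} \<inter> tent r -` {..x}"
      proof
        fix t assume "t \<in> {0..r*x} \<union> {1 - (1 - r) * x<..1}"
        then show "t \<in> {0..1} \<inter> tent r -` {..x}"
          using tent_le_a[OF r, of x t] tent_le_b[OF r, of x t] rx rx0 rx1 2 by auto
      qed
      show "{0..1} \<inter> tent r -` {..x} \<subseteq> {0..r*x} \<union> {1 - (1 - r) * x..1}"
        using tent_le_c[OF r, where x=x] by force
      show "measure lborel ({0..r*x} \<union> {1 - (1 - r) * x<..1}) \<ge> x"
        using two_int(1)[OF rx0 rx rx1] by (simp add: algebra_simps)
      show "measure lborel ({0..r*x} \<union> {1 - (1 - r) * x..1}) \<le> x"
        using two_int(2)[OF rx0 rx rx1] by (simp add: algebra_simps)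
      have "{0..1::real} \<in> fmeasurable lborel" by (intro fmeasurableI) auto
      then show "{0..r*x} \<union> {1 - (1 - r) * x..1} \<in> fmeasurable lborel"
        by (rule fmeasurableI2) (use rx rx0 rx1 2 r in \<open>auto simp: mult_le_one\<close>)
    qed (use S in auto)
    then show ?thesis using meas_clamp[of x] 2 by simp
  qed
qed


lemma shft_cdf:
  assumes c: "0 \<le> c" "c \<le> 1"
  shows "measure lborel ({0..1} \<inter> shft c -` {..x}) = measure lborel ({0..1} \<inter> {..x})"
proof -
  have S: "{0..1} \<inter> shft c -` {..x} \<in> sets lborel"
    using measurable_sets[OF shft_meas, of "{..x}" c] by auto
  have F: "{0..1::real} \<in> fmeasurable lborel" by (intro fmeasurableI) auto
  consider "x < 0" | "0 \<le> x" "x < 1" "x + c \<le> 1" | "0 \<le> x" "x < 1" "x + c > 1" | "x \<ge> 1" by linarith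
  then show ?thesis
  proof cases
    case 1
    then have "{0..1} \<inter> shft c -` {..x} = {}" using c unfolding shft_def by (auto split: if_splits)
    moreover have "{0..1} \<inter> {..x} = {}" using 1 by auto
    ultimately show ?thesis by simp
  next
    case 4
    then have "{0..1} \<inter> shft c -` {..x} = {0..1}" using c unfolding shft_def by (auto split: if_splits)
    moreover have "{0..1} \<inter> {..x} = {0..1}" using 4 by auto
    ultimately show ?thesis by simp
  next
    case 2
    have "measure lborel ({0..1} \<inter> shft c -` {..x}) = x"
    proof (rule sandwich[where L="{c..c} \<union> {c<..c+x}" and V="{0..0} \<union> {c..c+x}"])
      show "{c..c} \<union> {c<..c+x} \<subseteq> {0..1} \<inter> shft c -` {..x}"
        using 2 c unfolding shft_def by auto
      show "{0..1} \<inter> shft c -` {..x} \<subseteq> {0..0} \<union> {c..c+x}"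
        using 2 c unfolding shft_def by (auto split: if_splits)
      show "measure lborel ({c..c} \<union> {c<..c+x}) \<ge> x"
        using two_int(1)[of c c c "c+x"] 2 by simp
      show "measure lborel ({0..0} \<union> {c..c+x}) \<le> x"
        using two_int(2)[of 0 0 c "c+x"] 2 c by simp
      show "{0..0} \<union> {c..c+x} \<in> fmeasurable lborel"
        by (rule fmeasurableI2[OF F]) (use 2 c in auto)
    qed (use S in auto)
    then show ?thesis using meas_clamp[of x] 2 by simp
  next
    case 3
    have "measure lborel ({0..1} \<inter> shft c -` {..x}) = x"
    proof (rule sandwich[where L="{0..x-1+c} \<union> {c<..1}" and V="{0..x-1+c} \<union> {c..1}"])
      show "{0..x-1+c} \<union> {c<..1} \<subseteq> {0..1} \<inter> shft c -` {..x}"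
        using 3 c unfolding shft_def by auto
      show "{0..1} \<inter> shft c -` {..x} \<subseteq> {0..x-1+c} \<union> {c..1}"
        using 3 c unfolding shft_def by (auto split: if_splits)
      show "measure lborel ({0..x-1+c} \<union> {c<..1}) \<ge> x"
        using two_int(1)[of 0 "x-1+c" c 1] 3 c by simp
      show "measure lborel ({0..x-1+c} \<union> {c..1}) \<le> x"
        using two_int(2)[of 0 "x-1+c" c 1] 3 c by simp
      show "{0..x-1+c} \<union> {c..1} \<in> fmeasurable lborel"
        by (rule fmeasurableI2[OF F]) (use 3 c in auto)
    qed (use S in auto)
    then show ?thesis using meas_clamp[of x] 3 by simp
  qed
qed

lemma distr_tent: "0 \<le> r \<Longrightarrow> r \<le> 1 \<Longrightarrow> distr UU lborel (tent r) = UU"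
  by (rule distr_UU_eqI[OF tent_meas tent_cdf])

lemma distr_shft: "0 \<le> c \<Longrightarrow> c \<le> 1 \<Longrightarrow> distr UU lborel (shft c) = UU"
  by (rule distr_UU_eqI[OF shft_meas shft_cdf])

lemma distr_ts:
  assumes "0 \<le> r" "r \<le> 1" "0 \<le> c" "c \<le> 1"
  shows "distr UU lborel (\<lambda>t. tent r (shft c t)) = UU"
proof -
  have "distr UU lborel (\<lambda>t. tent r (shft c t)) = distr (distr UU lborel (shft c)) lborel (tent r)"
    by (subst distr_distr) (auto simp: comp_def)
  also have "\<dots> = UU" using assms by (simp add: distr_shft distr_tent)
  finally show ?thesis .
qed


lemma aux1: "x \<noteq> 0 \<Longrightarrow> C \<noteq> 0 \<Longrightarrow> D \<noteq> 0 \<Longrightarrow> x * (y / (C*x/D)) = y*D/(C::real)"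
  by (simp add: field_simps)
lemma aux2: "x \<noteq> 0 \<Longrightarrow> A \<noteq> 0 \<Longrightarrow> D \<noteq> 0 \<Longrightarrow> x * ((A*x/D - t)/(A*x/D)) = x - D*t/(A::real)"
  by (simp add: field_simps)

lemma key_id:
  fixes A B C t :: real
  assumes A: "A \<ge> 0" and B: "B \<ge> 0" and C: "C \<ge> 0" and AB: "A + B > 0" and AC: "A + C > 0" and BC: "B + C > 0"
  defines "D \<equiv> A*B + B*C + C*A"
  defines "p \<equiv> C*A/D" and "q \<equiv> A*(B+C)/D"
  assumes t: "0 < t" "t < 1" "t \<noteq> p" "t \<noteq> q"
  shows "(A+B) * tent (q-p) (shft p t) + (A+C) * tent p t + (B+C) * tent (1-q) (shft q t) = A+B+C"
proof -
  have Dpos: "D > 0"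
  proof -
    have "A*B \<ge> 0" "B*C \<ge> 0" "C*A \<ge> 0" using A B C by auto
    moreover have "A*B > 0 \<or> B*C > 0 \<or> C*A > 0"
      using A B C AB AC BC by (metis add.commute add_0 linorder_neqE_linordered_idom mult_pos_pos order.not_eq_order_implies_strict)
    ultimately show ?thesis unfolding D_def by linarith
  qed
  have qp: "q - p = A*B/D" unfolding p_def q_def by (simp add: diff_divide_distrib[symmetric] algebra_simps)
  have q1: "1 - q = B*C/D" unfolding q_def using Dpos by (simp add: field_simps D_def)
  have qp1: "1 - (q - p) = C*(A+B)/D" unfolding qp using Dpos by (simp add: field_simps D_def)
  have p1: "1 - p = (A*B+B*C)/D" unfolding p_def using Dpos by (simp add: field_simps D_def)
  have p0: "p \<ge> 0" unfolding p_def using A C Dpos by simp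
  have qp0: "q - p \<ge> 0" unfolding qp using A B Dpos by simp
  have q10: "1 - q \<ge> 0" unfolding q1 using B C Dpos by simp
  consider "t < p" | "p < t" "t < q" | "q < t" using t by linarith
  then show ?thesis
  proof cases
    case 1
    then have pp: "p > 0" using t by linarith
    then have Cp: "C > 0" and Ap: "A > 0" unfolding p_def using Dpos A C
      by (auto simp: zero_less_divide_iff zero_less_mult_iff)
    have e1: "tent (q-p) (shft p t) = (p - t) / (C*(A+B)/D)"
      unfolding shft_def tent_def using 1 t q10 qp1 by auto
    have e2: "tent p t = t / p" unfolding tent_def using 1 by auto
    have e3: "tent (1-q) (shft q t) = (q - t) / q"
      unfolding shft_def tent_def using 1 t q10 qp0 by auto
    have h1: "(A+B) * ((p - t) / (C*(A+B)/D)) = A - D*t/C"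
    proof -
      have "(A+B) * ((p - t) / (C*(A+B)/D)) = (p - t)*D/C" by (rule aux1) (use Dpos Cp AB in auto)
      also have "\<dots> = A - D*t/C" unfolding p_def using Dpos Cp by (simp add: field_simps)
      finally show ?thesis .
    qed
    have h2: "(A+C) * (t / p) = D*t/C + D*t/A"
      unfolding p_def using Dpos Cp Ap by (simp add: field_simps)
    have h3: "(B+C) * ((q - t) / q) = (B+C) - D*t/A"
      unfolding q_def using aux2[of "B+C" A D t] Dpos BC Ap by simp
    show ?thesis unfolding e1 e2 e3 h1 h2 h3 by simp
  next
    case 2
    then have Ap: "A > 0" and Bp: "B > 0" using qp Dpos A B
      by (smt (verit, best) divide_nonpos_pos mult_nonneg_nonpos mult_nonpos_nonneg p0 t(1))+
    have e1: "tent (q-p) (shft p t) = (t - p) / (A*B/D)"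
      unfolding shft_def tent_def using 2 t qp by auto
    have e2: "tent p t = (1 - t) / ((A*B+B*C)/D)" unfolding p1[symmetric] tent_def using 2 by auto
    have e3: "tent (1-q) (shft q t) = (q - t) / q"
      unfolding shft_def tent_def using 2 t q10 qp0 by auto
    have h1: "(A+B) * ((t - p) / (A*B/D)) = D*t/B + D*t/A - (A+B)*C/B"
      unfolding p_def using Dpos Bp Ap by (simp add: field_simps)
    have h2: "(A+C) * ((1 - t) / ((A*B+B*C)/D)) = D/B - D*t/B"
    proof -
      have "A*B+B*C = B*(A+C)" by (simp add: algebra_simps)
      then have "(A+C) * ((1 - t) / ((A*B+B*C)/D)) = (A+C) * ((1 - t) / (B*(A+C)/D))" by simp
      also have "\<dots> = (1 - t)*D/B" by (rule aux1) (use Dpos Bp AC in auto)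
      also have "\<dots> = D/B - D*t/B" using Bp by (simp add: field_simps)
      finally show ?thesis .
    qed
    have h3: "(B+C) * ((q - t) / q) = (B+C) - D*t/A"
      unfolding q_def using aux2[of "B+C" A D t] Dpos BC Ap by simp
    have h4: "D/B - (A+B)*C/B = A" using Bp unfolding D_def by (simp add: field_simps)
    show ?thesis unfolding e1 e2 e3 h1 h2 h3 using h4 by (simp add: algebra_simps)
  next
    case 3
    then have Cp: "C > 0" and Bp: "B > 0" using q1 Dpos B C t
      by (smt (verit, best) divide_nonpos_pos mult_nonneg_nonpos mult_nonpos_nonneg)+
    have e1: "tent (q-p) (shft p t) = (1 - (t - p)) / (C*(A+B)/D)"
      unfolding shft_def tent_def using 3 t qp1 p0 qp0 by auto
    have e2: "tent p t = (1 - t) / ((A*B+B*C)/D)" unfolding p1[symmetric] tent_def using 3 qp0 by auto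
    have e3: "tent (1-q) (shft q t) = (t - q) / (B*C/D)"
      unfolding shft_def tent_def using 3 t q1 by auto
    have h1: "(A+B) * ((1 - (t - p)) / (C*(A+B)/D)) = D/C - D*t/C + A"
    proof -
      have "(A+B) * ((1 - (t - p)) / (C*(A+B)/D)) = (1 - (t - p))*D/C" by (rule aux1) (use Dpos Cp AB in auto)
      also have "\<dots> = D/C - D*t/C + A" unfolding p_def using Dpos Cp by (simp add: field_simps)
      finally show ?thesis .
    qed
    have h2: "(A+C) * ((1 - t) / ((A*B+B*C)/D)) = D/B - D*t/B"
    proof -
      have "A*B+B*C = B*(A+C)" by (simp add: algebra_simps)
      then have "(A+C) * ((1 - t) / ((A*B+B*C)/D)) = (A+C) * ((1 - t) / (B*(A+C)/D))" by simp
      also have "\<dots> = (1 - t)*D/B" by (rule aux1) (use Dpos Bp AC in auto)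
      also have "\<dots> = D/B - D*t/B" using Bp by (simp add: field_simps)
      finally show ?thesis .
    qed
    have h3: "(B+C) * ((t - q) / (B*C/D)) = D*t/C + D*t/B - A*(B+C)*(B+C)/(B*C)"
      unfolding q_def using Dpos Bp Cp by (simp add: field_simps)
    have h4: "D/C + D/B - A*(B+C)*(B+C)/(B*C) = B + C" using Bp Cp unfolding D_def by (simp add: field_simps)
    show ?thesis unfolding e1 e2 e3 h1 h2 h3 using h4 by (simp add: algebra_simps)
  qed
qed


lemma params:
  fixes A B C :: real
  assumes A: "A \<ge> 0" and B: "B \<ge> 0" and C: "C \<ge> 0" and AB: "A + B > 0" and AC: "A + C > 0" and BC: "B + C > 0"
  defines "D \<equiv> A*B + B*C + C*A"
  defines "p \<equiv> C*A/D" and "q \<equiv> A*(B+C)/D"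
  shows "0 \<le> p" "p \<le> q" "q \<le> 1"
proof -
  have Dpos: "D > 0"
  proof -
    have "A*B \<ge> 0" "B*C \<ge> 0" "C*A \<ge> 0" using A B C by auto
    moreover have "A*B > 0 \<or> B*C > 0 \<or> C*A > 0"
      using A B C AB AC BC by (metis add.commute add_0 linorder_neqE_linordered_idom mult_pos_pos order.not_eq_order_implies_strict)
    ultimately show ?thesis unfolding D_def by linarith
  qed
  show "0 \<le> p" unfolding p_def using A C Dpos by simp
  have "q - p = A*B/D" unfolding p_def q_def by (simp add: diff_divide_distrib[symmetric] algebra_simps)
  moreover have "A*B/D \<ge> 0" using A B Dpos by simp
  ultimately show "p \<le> q" by linarith
  have "1 - q = B*C/D" unfolding q_def using Dpos by (simp add: field_simps D_def)
  moreover have "B*C/D \<ge> 0" using B C Dpos by simp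
  ultimately show "q \<le> 1" by linarith
qed

lemma proj_meas[measurable]:
  "(\<lambda>(u1::real,u2::real,u3::real). u1) \<in> borel_measurable borel"
  "(\<lambda>(u1::real,u2::real,u3::real). u2) \<in> borel_measurable borel"
  "(\<lambda>(u1::real,u2::real,u3::real). u3) \<in> borel_measurable borel"
proof -
  have "(\<lambda>(u1::real,u2::real,u3::real). u1) = fst" by auto
  then show "(\<lambda>(u1::real,u2::real,u3::real). u1) \<in> borel_measurable borel"
    by (simp add: borel_measurable_continuous_onI continuous_on_fst continuous_on_id)
  have "(\<lambda>(u1::real,u2::real,u3::real). u2) = (\<lambda>x. fst (snd x))" by auto
  then show "(\<lambda>(u1::real,u2::real,u3::real). u2) \<in> borel_measurable borel"
    by (simp add: borel_measurable_continuous_onI continuous_on_fst continuous_on_snd continuous_on_id)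
  have "(\<lambda>(u1::real,u2::real,u3::real). u3) = (\<lambda>x. snd (snd x))" by auto
  then show "(\<lambda>(u1::real,u2::real,u3::real). u3) \<in> borel_measurable borel"
    by (simp add: borel_measurable_continuous_onI continuous_on_snd continuous_on_id)
qed

theorem mainTheorem4:
  fixes w1 w2 w3 :: real
  assumes "w1 > 0" "w2 > 0" "w3 > 0"
    and "w1 + w2 + w3 \<ge> 2 * Max {w1, w2, w3}"
  shows "\<exists>M. wCM3 (w1, w2, w3) M"
proof -
  have m: "w1 \<le> Max {w1, w2, w3}" "w2 \<le> Max {w1, w2, w3}" "w3 \<le> Max {w1, w2, w3}" by simp_all
  define A where "A = (w1 + w2 - w3)/2"
  define B where "B = (w1 + w3 - w2)/2"
  define C where "C = (w2 + w3 - w1)/2"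
  obtain Mx where Mx: "Mx = Max {w1, w2, w3}" by simp
  have h1: "2 * w1 \<le> w1 + w2 + w3" using assms(4) m(1) unfolding Mx[symmetric] by linarith
  have h2: "2 * w2 \<le> w1 + w2 + w3" using assms(4) m(2) unfolding Mx[symmetric] by linarith
  have h3: "2 * w3 \<le> w1 + w2 + w3" using assms(4) m(3) unfolding Mx[symmetric] by linarith
  have A: "A \<ge> 0" using h3 unfolding A_def by (simp add: field_simps)
  have B: "B \<ge> 0" using h2 unfolding B_def by (simp add: field_simps)
  have C: "C \<ge> 0" using h1 unfolding C_def by (simp add: field_simps)
  have w1: "w1 = A + B" unfolding A_def B_def by (simp add: field_simps)
  have w2: "w2 = A + C" unfolding A_def C_def by (simp add: field_simps)
  have w3: "w3 = B + C" unfolding B_def C_def by (simp add: field_simps)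
  have AB: "A + B > 0" using assms w1 by simp
  have AC: "A + C > 0" using assms w2 by simp
  have BC: "B + C > 0" using assms w3 by simp
  define D where "D = A*B + B*C + C*A"
  define p where "p = C*A/D"
  define q where "q = A*(B+C)/D"
  note pq = params[OF A B C AB AC BC, folded D_def, folded p_def q_def]
  define V1 where "V1 = (\<lambda>t. tent (q-p) (shft p t))"
  define V2 where "V2 = (\<lambda>t. tent p t)"
  define V3 where "V3 = (\<lambda>t. tent (1-q) (shft q t))"
  have [measurable]: "V1 \<in> borel_measurable borel" "V2 \<in> borel_measurable borel" "V3 \<in> borel_measurable borel"
    unfolding V1_def V2_def V3_def by measurable
  define g where "g = (\<lambda>t. (V1 t, V2 t, V3 t))"
  have gm[measurable]: "g \<in> borel_measurable borel" unfolding g_def by measurable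
  define M where "M = distr UU borel g"
  have d1: "distr UU lborel V1 = UU" unfolding V1_def by (rule distr_ts) (use pq in auto)
  have d2: "distr UU lborel V2 = UU" unfolding V2_def by (rule distr_tent) (use pq in auto)
  have d3: "distr UU lborel V3 = UU" unfolding V3_def by (rule distr_ts) (use pq in auto)
  have PM: "prob_space M" unfolding M_def by (rule prob_space.prob_space_distr[OF UU_prob]) simp
  have sM: "sets M = sets borel" unfolding M_def by simp
  have m1: "distr M lborel (\<lambda>(u1,u2,u3). u1) = uniform_measure lborel {0..1}"
    unfolding M_def by (subst distr_distr) (auto simp: comp_def g_def d1)
  have m2: "distr M lborel (\<lambda>(u1,u2,u3). u2) = uniform_measure lborel {0..1}"
    unfolding M_def by (subst distr_distr) (auto simp: comp_def g_def d2)
  have m3: "distr M lborel (\<lambda>(u1,u2,u3). u3) = uniform_measure lborel {0..1}"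
    unfolding M_def by (subst distr_distr) (auto simp: comp_def g_def d3)
  define E where "E = {(u1,u2,u3). w1*u1 + w2*u2 + w3*u3 = (w1+w2+w3)/2}"
  have E_eq: "E = (\<lambda>(u1,u2,u3). w1*u1 + w2*u2 + w3*u3) -` {(w1+w2+w3)/2}" unfolding E_def by auto
  have fm: "(\<lambda>(u1,u2,u3). w1*u1 + w2*u2 + w3*u3) \<in> borel_measurable (borel :: (real \<times> real \<times> real) measure)"
  proof -
    have "(\<lambda>(u1,u2,u3). w1*u1 + w2*u2 + w3*u3) = (\<lambda>x::real\<times>real\<times>real. w1 * fst x + w2 * fst (snd x) + w3 * snd (snd x))"
      by auto
    moreover have "continuous_on UNIV (\<lambda>x::real\<times>real\<times>real. w1 * fst x + w2 * fst (snd x) + w3 * snd (snd x))"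
      by (intro continuous_intros)
    ultimately show ?thesis by (simp add: borel_measurable_continuous_onI)
  qed
  have Em: "E \<in> sets borel" unfolding E_eq using fm
    using measurable_sets[of "\<lambda>(u1,u2,u3). w1*u1 + w2*u2 + w3*u3" borel borel "{(w1+w2+w3)/2}"] by simp
  have GE: "g -` E \<in> sets borel" using measurable_sets[OF gm Em] by simp
  have sub: "{0<..<1} - {p, q} \<subseteq> {0..1} \<inter> g -` E"
  proof
    fix t assume t: "t \<in> {0<..<1} - {p, q}"
    have "(A+B) * V1 t + (A+C) * V2 t + (B+C) * V3 t = A+B+C"
      unfolding V1_def V2_def V3_def p_def q_def D_def
      by (rule key_id[OF A B C AB AC BC]) (use t in \<open>auto simp: p_def q_def D_def\<close>)
    then show "t \<in> {0..1} \<inter> g -` E" using t unfolding E_def g_def w1 w2 w3 by auto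
  qed
  have "measure lborel ({0..1} \<inter> g -` E) = 1"
  proof (rule sandwich[where L="{0<..<1} - {p, q}" and V="{0..1}"])
    show "measure lborel ({0<..<1} - {p, q}) \<ge> 1"
      by (subst measure_Diff_null_set) (auto intro: finite_imp_null_set_lborel)
  qed (use sub GE in \<open>auto intro: fmeasurableI\<close>)
  then have "measure M E = 1" unfolding M_def
    using GE by (subst measure_distr) (auto simp: Em measure_UU)
  then have "prob_space.prob M {(u1,u2,u3). w1*u1 + w2*u2 + w3*u3 = (w1+w2+w3)/2} = 1"
    unfolding E_def by simp
  then have "wCM3 (w1, w2, w3) M"
    unfolding wCM3_def copula_law3_def using PM sM m1 m2 m3 by simp
  then show ?thesis by blast
qed

end
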